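(* Let $P$ be a monotone irreducible positive recurrent stochastic kernel on $\mathbb{N}=\{1,2,\dots\}$ with stationary distribution $\pi>0$, and let $N\ge2$. Let $P_N$ be the truncated kernel on $I_N=\{1,\dots,N\}$ defined by: for $x<N$, $P_N(x,y)=P(x,y)$ for $y<N$ and $P_N(x,N)=\sum_{z\ge N}P(x,z)$; and $P_N(N,y)=\overline{\pi}(N)^{-1}\sum_{z\ge N}\pi(z)P(z,y)$ for $y<N$, $P_N(N,N)=\overline{\pi}(N)^{-1}\sum_{z\ge N}\pi(z)\sum_{u\ge N}P(z,u)$, where $\overline{\pi}(N)=\sum_{z\ge N}\pi(z)$. Then $P_N$ is a monotone kernel on $I_N$, and it has a nonnegative Siegmund dual $\widehat{P}_N$ on $I_N$, i.e. there is a matrix $\widehat{P}_N=(\widehat{P}_N(x,y):x,y\in I_N)$ with nonnegative entries satisfying $H^S\widehat{P}_N^{\,\prime}=P_NH^S$, and $N$ is an absorbing state for $\widehat{P}_N$ (that is, $\widehat{P}_N(N,y)=\delta_{y,N}$ for $y\in I_N$).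
   Context: A stochastic kernel $Q$ on $I$ (with $I=\mathbb{N}$ or $I=I_N$) is monotone if for every $y\in I$ the map $x\mapsto\sum_{z\le y}Q(x,z)$ is decreasing in $x\in I$. The Siegmund kernel on $I_N$ is $H^S(x,y)=\mathbf{1}(x\le y)$, $x,y\in I_N$, and $M'$ denotes the transpose of a matrix $M$. *)

theory Defs
  imports "HOL-Analysis.Analysis"
begin

text \<open>Kernels are functions nat => nat => real; only the values on the index
set I (here {1..} = the paper's N, or {1..N} = I_N) matter.\<close>

definition stochastic_kernel :: "nat set \<Rightarrow> (nat \<Rightarrow> nat \<Rightarrow> real) \<Rightarrow> bool" where
  "stochastic_kernel I Q \<longleftrightarrow>
     (\<forall>x\<in>I. (\<forall>y\<in>I. 0 \<le> Q x y) \<and> ((Q x) has_sum 1) I)"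

definition monotone_kernel :: "nat set \<Rightarrow> (nat \<Rightarrow> nat \<Rightarrow> real) \<Rightarrow> bool" where
  "monotone_kernel I Q \<longleftrightarrow>
     (\<forall>y\<in>I. \<forall>x\<in>I. \<forall>x'\<in>I. x \<le> x' \<longrightarrow>
        (\<Sum>z\<in>{z\<in>I. z \<le> y}. Q x' z) \<le> (\<Sum>z\<in>{z\<in>I. z \<le> y}. Q x z))"

fun kernel_pow :: "nat set \<Rightarrow> (nat \<Rightarrow> nat \<Rightarrow> real) \<Rightarrow> nat \<Rightarrow> nat \<Rightarrow> nat \<Rightarrow> real" where
  "kernel_pow I Q 0 x y = (if x = y then 1 else 0)"
| "kernel_pow I Q (Suc n) x y = (\<Sum>\<^sub>\<infinity>z\<in>I. kernel_pow I Q n x z * Q z y)"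

definition irreducible_kernel :: "nat set \<Rightarrow> (nat \<Rightarrow> nat \<Rightarrow> real) \<Rightarrow> bool" where
  "irreducible_kernel I Q \<longleftrightarrow> (\<forall>x\<in>I. \<forall>y\<in>I. \<exists>n. kernel_pow I Q n x y > 0)"

fun first_passage :: "nat set \<Rightarrow> (nat \<Rightarrow> nat \<Rightarrow> real) \<Rightarrow> nat \<Rightarrow> nat \<Rightarrow> nat \<Rightarrow> real" where
  "first_passage I Q 0 x y = 0"
| "first_passage I Q (Suc 0) x y = Q x y"
| "first_passage I Q (Suc (Suc n)) x y =
     (\<Sum>\<^sub>\<infinity>z\<in>I - {y}. Q x z * first_passage I Q (Suc n) z y)"

definition positive_recurrent :: "nat set \<Rightarrow> (nat \<Rightarrow> nat \<Rightarrow> real) \<Rightarrow> bool" where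
  "positive_recurrent I Q \<longleftrightarrow>
     (\<forall>x\<in>I. ((\<lambda>n. first_passage I Q n x x) has_sum 1) UNIV \<and>
            (\<lambda>n. real n * first_passage I Q n x x) summable_on UNIV)"

definition stationary_distribution :: "nat set \<Rightarrow> (nat \<Rightarrow> nat \<Rightarrow> real) \<Rightarrow> (nat \<Rightarrow> real) \<Rightarrow> bool" where
  "stationary_distribution I Q \<pi> \<longleftrightarrow>
     (\<forall>x\<in>I. 0 \<le> \<pi> x) \<and> (\<pi> has_sum 1) I \<and>
     (\<forall>y\<in>I. ((\<lambda>z. \<pi> z * Q z y) has_sum \<pi> y) I)"

definition pibar :: "(nat \<Rightarrow> real) \<Rightarrow> nat \<Rightarrow> real" where
  "pibar \<pi> N = (\<Sum>\<^sub>\<infinity>z\<in>{N..}. \<pi> z)"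

definition truncated_kernel :: "(nat \<Rightarrow> nat \<Rightarrow> real) \<Rightarrow> (nat \<Rightarrow> real) \<Rightarrow> nat \<Rightarrow> nat \<Rightarrow> nat \<Rightarrow> real" where
  "truncated_kernel P \<pi> N x y =
     (if x < N then
        (if y < N then P x y else (\<Sum>\<^sub>\<infinity>z\<in>{N..}. P x z))
      else
        (if y < N then (\<Sum>\<^sub>\<infinity>z\<in>{N..}. \<pi> z * P z y) / pibar \<pi> N
         else (\<Sum>\<^sub>\<infinity>z\<in>{N..}. \<pi> z * (\<Sum>\<^sub>\<infinity>u\<in>{N..}. P z u)) / pibar \<pi> N))"

definition siegmund :: "nat \<Rightarrow> nat \<Rightarrow> real" where
  "siegmund x y = (if x \<le> y then 1 else 0)"

end

theory Submission
  imports Defs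
begin

lemma my_infsum_sum:
  fixes f :: "'i \<Rightarrow> 'a \<Rightarrow> real"
  assumes "finite I" "\<And>i. i \<in> I \<Longrightarrow> f i summable_on A"
  shows "(\<lambda>x. \<Sum>i\<in>I. f i x) summable_on A \<and> infsum (\<lambda>x. \<Sum>i\<in>I. f i x) A = (\<Sum>i\<in>I. infsum (f i) A)"
  using assms
proof (induction I rule: finite_induct)
  case empty
  then show ?case by simp
next
  case (insert j I)
  then have IH: "(\<lambda>x. \<Sum>i\<in>I. f i x) summable_on A" "infsum (\<lambda>x. \<Sum>i\<in>I. f i x) A = (\<Sum>i\<in>I. infsum (f i) A)"
    by auto
  have fj: "f j summable_on A" using insert by auto
  show ?case
    using insert.hyps IH fj summable_on_add[OF fj IH(1)] infsum_add[OF fj IH(1)] by simp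
qed

lemma siegmund_dual:
  fixes Q :: "nat \<Rightarrow> nat \<Rightarrow> real" and N :: nat
  assumes st: "stochastic_kernel {1..N} Q" and mo: "monotone_kernel {1..N} Q" and N1: "N \<ge> 1"
  shows "\<exists>Ph :: nat \<Rightarrow> nat \<Rightarrow> real.
            (\<forall>x\<in>{1..N}. \<forall>y\<in>{1..N}. 0 \<le> Ph x y)
          \<and> (\<forall>x\<in>{1..N}. \<forall>y\<in>{1..N}.
               (\<Sum>z\<in>{1..N}. siegmund x z * Ph y z)
             = (\<Sum>z\<in>{1..N}. Q x z * siegmund z y))
          \<and> (\<forall>y\<in>{1..N}. Ph N y = (if y = N then 1 else 0))"
proof -
  define F where "F x y = (\<Sum>z\<in>{1..N}. Q x z * siegmund z y)" for x y
  have Fe: "F x y = (\<Sum>z\<in>{z\<in>{1..N}. z \<le> y}. Q x z)" for x y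
  proof -
    have "F x y = (\<Sum>z\<in>{1..N}. if z \<le> y then Q x z else 0)"
      unfolding F_def siegmund_def by (intro sum.cong) auto
    then show ?thesis by (simp only: sum.inter_filter[OF finite_atLeastAtMost])
  qed
  have FN: "F x N = 1" if "x \<in> {1..N}" for x
  proof -
    have "(Q x has_sum 1) {1..N}" using st that unfolding stochastic_kernel_def by auto
    then have "sum (Q x) {1..N} = 1" using has_sum_unique has_sum_finite by blast
    moreover have "{z\<in>{1..N}. z \<le> N} = {1..N}" by auto
    ultimately show ?thesis using Fe by simp
  qed
  have Fmono: "F x' y \<le> F x y" if "x \<in> {1..N}" "x' \<in> {1..N}" "y \<in> {1..N}" "x \<le> x'" for x x' y
    using mo that unfolding monotone_kernel_def Fe by blast
  have Fnn: "0 \<le> F x y" if "x \<in> {1..N}" for x y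
    using st that unfolding stochastic_kernel_def Fe by (auto intro: sum_nonneg)
  define G where "G y z = (if z \<le> N then F z y else 0)" for y z
  define Ph where "Ph y z = G y z - G y (Suc z)" for y z
  show ?thesis
  proof (intro exI[of _ Ph] conjI ballI)
    fix x y assume x: "x \<in> {1..N}" and y: "y \<in> {1..N}"
    show "0 \<le> Ph x y"
    proof (cases "y < N")
      case True
      then show ?thesis unfolding Ph_def G_def using Fmono[of y "Suc y" x] x y by auto
    next
      case False
      then show ?thesis unfolding Ph_def G_def using Fnn[of y x] y by auto
    qed
  next
    fix x y assume x: "x \<in> {1..N}" and y: "y \<in> {1..N}"
    have "(\<Sum>z\<in>{1..N}. siegmund x z * Ph y z) = (\<Sum>z\<in>{z\<in>{1..N}. x \<le> z}. Ph y z)"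
    proof -
      have "(\<Sum>z\<in>{1..N}. siegmund x z * Ph y z) = (\<Sum>z\<in>{1..N}. if x \<le> z then Ph y z else 0)"
        unfolding siegmund_def by (intro sum.cong) auto
      then show ?thesis by (simp only: sum.inter_filter[OF finite_atLeastAtMost])
    qed
    also have "{z\<in>{1..N}. x \<le> z} = {x..N}" using x by auto
    also have "(\<Sum>z\<in>{x..N}. Ph y z) = - (\<Sum>z\<in>{x..N}. G y (Suc z) - G y z)"
      unfolding Ph_def by (simp add: sum_negf[symmetric])
    also have "\<dots> = G y x" using x by (subst sum_Suc_diff) (auto simp: G_def)
    also have "\<dots> = F x y" using x by (simp add: G_def)
    finally show "(\<Sum>z\<in>{1..N}. siegmund x z * Ph y z) = (\<Sum>z\<in>{1..N}. Q x z * siegmund z y)"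
      unfolding F_def .
  next
    fix y assume y: "y \<in> {1..N}"
    show "Ph N y = (if y = N then 1 else 0)"
    proof (cases "y < N")
      case True
      then show ?thesis unfolding Ph_def G_def using FN[of y] FN[of "Suc y"] y by auto
    next
      case False
      then have "y = N" using y by auto
      then show ?thesis unfolding Ph_def G_def using FN[of N] N1 by auto
    qed
  qed
qed


theorem proposition4:
  fixes P :: "nat \<Rightarrow> nat \<Rightarrow> real" and \<pi> :: "nat \<Rightarrow> real" and N :: nat
  assumes "stochastic_kernel {1..} P"
    and "monotone_kernel {1..} P"
    and "irreducible_kernel {1..} P"
    and "positive_recurrent {1..} P"
    and "stationary_distribution {1..} P \<pi>"
    and "\<forall>x\<ge>1. \<pi> x > 0"
    and "N \<ge> 2"
  shows "stochastic_kernel {1..N} (truncated_kernel P \<pi> N)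
       \<and> monotone_kernel {1..N} (truncated_kernel P \<pi> N)
       \<and> (\<exists>Ph :: nat \<Rightarrow> nat \<Rightarrow> real.
            (\<forall>x\<in>{1..N}. \<forall>y\<in>{1..N}. 0 \<le> Ph x y)
          \<and> (\<forall>x\<in>{1..N}. \<forall>y\<in>{1..N}.
               (\<Sum>z\<in>{1..N}. siegmund x z * Ph y z)
             = (\<Sum>z\<in>{1..N}. truncated_kernel P \<pi> N x z * siegmund z y))
          \<and> (\<forall>y\<in>{1..N}. Ph N y = (if y = N then 1 else 0)))"
proof -
  note st = assms(1) and mo = assms(2) and sd = assms(5) and pipos = assms(6) and N2 = assms(7)
  define Q where "Q = truncated_kernel P \<pi> N"
  define T where "T x = (\<Sum>\<^sub>\<infinity>u\<in>{N..}. P x u)" for x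
  define S where "S y = (\<Sum>\<^sub>\<infinity>z\<in>{N..}. \<pi> z * P z y)" for y
  define W where "W = (\<Sum>\<^sub>\<infinity>z\<in>{N..}. \<pi> z * T z)"
  define pb where "pb = pibar \<pi> N"
  have Pnn: "0 \<le> P x y" if "x \<ge> 1" "y \<ge> 1" for x y
    using st that unfolding stochastic_kernel_def by auto
  have Phs: "(P x has_sum 1) {1..}" if "x \<ge> 1" for x
    using st that unfolding stochastic_kernel_def by auto
  have pinn: "0 \<le> \<pi> x" if "x \<ge> 1" for x using pipos that by force
  have pihs: "(\<pi> has_sum 1) {1..}" using sd unfolding stationary_distribution_def by auto
  have sub: "{N..} \<subseteq> {1::nat..}" using N2 by auto
  have PsN: "P x summable_on {N..}" if "x \<ge> 1" for x
    using summable_on_subset_banach[OF _ sub] Phs[OF that] by (auto simp: summable_on_def)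
  have Psplit: "(\<Sum>y\<in>{1..<N}. P x y) + T x = 1" if "x \<ge> 1" for x
  proof -
    have U: "{1::nat..} = {1..<N} \<union> {N..}" using N2 by auto
    have "1 = infsum (P x) {1..}" using infsumI[OF Phs[OF that]] by simp
    also have "\<dots> = infsum (P x) {1..<N} + infsum (P x) {N..}"
      unfolding U by (rule infsum_Un_disjoint) (auto intro: PsN[OF that])
    finally show ?thesis unfolding T_def by simp
  qed
  have Tnn: "0 \<le> T x" if "x \<ge> 1" for x
    unfolding T_def using that N2 by (intro infsum_nonneg Pnn) auto
  have Fle: "sum (P x) A \<le> 1" if "x \<ge> 1" "A \<subseteq> {1..<N}" for x A
  proof -
    have "sum (P x) A \<le> sum (P x) {1..<N}"
      using that by (intro sum_mono2) (auto intro: Pnn)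
    then show ?thesis using Psplit[OF that(1)] Tnn[OF that(1)] by linarith
  qed
  have Ple: "P x y \<le> 1" if "x \<ge> 1" "y \<in> {1..<N}" for x y
    using Fle[of x "{y}"] that by auto
  have Tle: "T x \<le> 1" if "x \<ge> 1" for x
    using Psplit[OF that] sum_nonneg[of "{1..<N}" "P x"] Pnn[OF that] by force
  have pis: "\<pi> summable_on {N..}"
    using summable_on_subset_banach[OF _ sub] pihs by (auto simp: summable_on_def)
  have pbpos: "pb > 0"
  proof -
    have "infsum \<pi> {N} \<le> infsum \<pi> {N..}"
      by (rule infsum_mono_neutral) (use pis N2 pinn in auto)
    moreover have "\<pi> N > 0" using pipos N2 by auto
    ultimately show ?thesis unfolding pb_def pibar_def by auto
  qed
  have Ss: "(\<lambda>z. \<pi> z * P z y) summable_on {N..}" if "y \<in> {1..<N}" for y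
    by (rule summable_on_comparison_test[OF pis])
       (use that N2 Ple pinn Pnn in \<open>auto intro!: mult_left_le mult_nonneg_nonneg\<close>)
  have Ws: "(\<lambda>z. \<pi> z * T z) summable_on {N..}"
    by (rule summable_on_comparison_test[OF pis])
       (use N2 Tle pinn Tnn in \<open>auto intro!: mult_left_le mult_nonneg_nonneg\<close>)
  have rowN: "(\<Sum>y\<in>{1..<N}. S y) + W = pb"
  proof -
    have A: "(\<lambda>z. \<Sum>y\<in>{1..<N}. \<pi> z * P z y) summable_on {N..}"
      "infsum (\<lambda>z. \<Sum>y\<in>{1..<N}. \<pi> z * P z y) {N..} = (\<Sum>y\<in>{1..<N}. S y)"
      using my_infsum_sum[of "{1..<N}" "\<lambda>y z. \<pi> z * P z y" "{N..}"] Ss unfolding S_def by auto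
    have "(\<Sum>y\<in>{1..<N}. S y) + W = infsum (\<lambda>z. (\<Sum>y\<in>{1..<N}. \<pi> z * P z y) + \<pi> z * T z) {N..}"
      using infsum_add[OF A(1) Ws] A(2) unfolding W_def by simp
    also have "\<dots> = infsum \<pi> {N..}"
    proof (rule infsum_cong)
      fix z assume "z \<in> {N..}"
      then have "z \<ge> 1" using N2 by auto
      then show "(\<Sum>y\<in>{1..<N}. \<pi> z * P z y) + \<pi> z * T z = \<pi> z"
        using Psplit[of z] by (simp add: sum_distrib_left[symmetric] distrib_left[symmetric])
    qed
    finally show ?thesis unfolding pb_def pibar_def .
  qed
  have Snn: "0 \<le> S y" if "y \<ge> 1" for y
    unfolding S_def using that N2 by (intro infsum_nonneg mult_nonneg_nonneg pinn Pnn) auto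
  have Wnn: "0 \<le> W"
    unfolding W_def using N2 by (intro infsum_nonneg mult_nonneg_nonneg pinn Tnn) auto
  have Qv: "Q x y = (if x < N then (if y < N then P x y else T x)
                     else (if y < N then S y / pb else W / pb))" for x y
    unfolding Q_def truncated_kernel_def T_def S_def W_def pb_def by simp
  have IN: "{1..N} = insert N {1..<N}" using N2 by auto
  have rows: "sum (Q x) {1..N} = 1" if "x \<in> {1..N}" for x
  proof (cases "x < N")
    case True
    then have "sum (Q x) {1..N} = (\<Sum>y\<in>{1..<N}. P x y) + T x"
      unfolding IN by (simp add: Qv add.commute)
    then show ?thesis using Psplit[of x] that by auto
  next
    case False
    then have "sum (Q x) {1..N} = (\<Sum>y\<in>{1..<N}. S y) / pb + W / pb"
      unfolding IN by (simp add: Qv add.commute sum_divide_distrib)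
    then show ?thesis using rowN pbpos by (simp add: add_divide_distrib[symmetric])
  qed
  have stQ: "stochastic_kernel {1..N} Q"
    unfolding stochastic_kernel_def
  proof (intro ballI conjI)
    fix x y assume "x \<in> {1..N}" "y \<in> {1..N}"
    then show "0 \<le> Q x y" unfolding Qv using Pnn Tnn Snn Wnn pbpos by auto
  next
    fix x assume "x \<in> {1..N}"
    then show "(Q x has_sum 1) {1..N}" using rows by (intro has_sum_finiteI) auto
  qed
  have moQ: "monotone_kernel {1..N} Q"
    unfolding monotone_kernel_def
  proof (intro ballI impI)
    fix y x x' assume y: "y \<in> {1..N}" and x: "x \<in> {1..N}" and x': "x' \<in> {1..N}" and xx: "x \<le> x'"
    show "(\<Sum>z\<in>{z\<in>{1..N}. z \<le> y}. Q x' z) \<le> (\<Sum>z\<in>{z\<in>{1..N}. z \<le> y}. Q x z)"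
    proof (cases "y < N")
      case False
      then have "{z\<in>{1..N}. z \<le> y} = {1..N}" using y by auto
      then show ?thesis using rows[OF x] rows[OF x'] by (simp only:)
    next
      case yN: True
      have Y: "{z\<in>{1..N}. z \<le> y} = {1..y}" using yN by auto
      have Pm: "(\<Sum>z\<in>{1..y}. P w z) \<le> (\<Sum>z\<in>{1..y}. P v z)" if "1 \<le> v" "v \<le> w" for v w
      proof -
        have E: "{z\<in>{1::nat..}. z \<le> y} = {1..y}" by auto
        have "y \<in> {1..}" "v \<in> {1..}" "w \<in> {1..}" using y that by auto
        from mo[unfolded monotone_kernel_def, rule_format, OF this that(2)] show ?thesis
          unfolding E .
      qed
      have QP: "(\<Sum>z\<in>{1..y}. Q u z) = (\<Sum>z\<in>{1..y}. P u z)" if "u < N" for u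
        by (rule sum.cong) (use that yN in \<open>auto simp: Qv\<close>)
      have QS: "(\<Sum>z\<in>{1..y}. Q N z) = (\<Sum>z\<in>{1..y}. S z) / pb"
        unfolding sum_divide_distrib by (rule sum.cong) (use yN in \<open>auto simp: Qv\<close>)
      show ?thesis
      proof (cases "x' < N")
        case True
        then have "x < N" using xx by auto
        then show ?thesis unfolding Y QP[OF True] QP[OF \<open>x < N\<close>] using Pm[of x x'] x xx by simp
      next
        case x'N: False
        show ?thesis
        proof (cases "x < N")
          case False
          then have "x = x'" using x x' x'N by auto
          then show ?thesis by simp
        next
          case xN: True
          define Fx where "Fx = (\<Sum>z\<in>{1..y}. P x z)"
          have A: "(\<lambda>w. \<Sum>z\<in>{1..y}. \<pi> w * P w z) summable_on {N..}"
            "infsum (\<lambda>w. \<Sum>z\<in>{1..y}. \<pi> w * P w z) {N..} = (\<Sum>z\<in>{1..y}. S z)"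
            using my_infsum_sum[of "{1..y}" "\<lambda>z w. \<pi> w * P w z" "{N..}"] Ss yN unfolding S_def by auto
          have "(\<Sum>z\<in>{1..y}. S z) \<le> infsum (\<lambda>w. \<pi> w * Fx) {N..}"
            unfolding A(2)[symmetric]
          proof (rule infsum_mono[OF A(1)])
            show "(\<lambda>w. \<pi> w * Fx) summable_on {N..}" using pis by (rule summable_on_cmult_left)
            fix w assume "w \<in> {N..}"
            then have w: "w \<ge> N" by auto
            then have "(\<Sum>z\<in>{1..y}. P w z) \<le> Fx" unfolding Fx_def using Pm[of x w] x xN by auto
            moreover have "0 \<le> \<pi> w" using w N2 pinn by auto
            ultimately show "(\<Sum>z\<in>{1..y}. \<pi> w * P w z) \<le> \<pi> w * Fx"
              by (simp add: sum_distrib_left[symmetric] mult_left_mono)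
          qed
          also have "\<dots> = Fx * pb" unfolding pb_def pibar_def by (simp add: infsum_cmult_left')
          finally have "(\<Sum>z\<in>{1..y}. S z) / pb \<le> Fx" using pbpos by (simp add: pos_divide_le_eq)
          moreover have "x' = N" using x' x'N by auto
          ultimately show ?thesis unfolding Y using QS QP[OF xN] by (simp add: Fx_def)
        qed
      qed
    qed
  qed
  have "N \<ge> 1" using N2 by auto
  from siegmund_dual[OF stQ moQ this] stQ moQ show ?thesis unfolding Q_def by blast
qed

end
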